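(* Let $x,y\in\ell^\infty$ with $|L_x|=n$ and $|L_y|=k$ for some integers $n,k\ge 2$. Then there exist $z_1,z_2\in\operatorname{span}\{x,y\}$ with $$|L_{z_1}|=|\mathcal{E}_{x,y}|\quad\text{and}\quad |L_{z_2}|<|\mathcal{E}_{x,y}|,$$ and moreover $$|\mathcal{E}_{x,y}|=\max\{|L_z|: z\in\operatorname{span}\{x,y\}\}.$$
   Context: $\ell^\infty$ is the Banach space of bounded real sequences $x=(x_n)_{n\ge1}$ with the sup norm. For $x\in\ell^\infty$, $L_x$ denotes the (non-empty compact) set of accumulation points of $x$, i.e. the set of $a\in\mathbb{R}$ such that $x_{n_k}\to a$ for some strictly increasing sequence $(n_k)$. For $S\subset\mathbb{N}$, $1_S$ is the indicator sequence of $S$; $x\sim_{c_0}y$ means $x-y$ converges to $0$. If $|L_x|=n<\infty$, one can write $x\sim_{c_0}\xi_11_{S_1}+\dots+\xi_n1_{S_n}$ where $S_1,\dots,S_n$ is a partition of $\mathbb{N}$ into infinite sets and $\xi_1,\dots,\xi_n$ are the distinct accumulation points; similarly $y\sim_{c_0}\eta_11_{T_1}+\dots+\eta_k1_{T_k}$. Then $\mathcal{E}_{x,y}=\{(i,j)\in\{1,\dots,n\}\times\{1,\dots,k\}: S_i\cap T_j\text{ is infinite}\}$ (this does not depend on the choice of the partitions, which are determined up to finite modifications). *)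

theory Defs
  imports "HOL-Analysis.Analysis"
begin

definition linf :: "(nat \<Rightarrow> real) set" where
  "linf = {x. bounded (range x)}"

definition acc_points :: "(nat \<Rightarrow> real) \<Rightarrow> real set" where
  "acc_points x = {a. \<exists>r. strict_mono r \<and> (x \<circ> r) \<longlonglongrightarrow> a}"

definition c0_decomp :: "(nat \<Rightarrow> real) \<Rightarrow> (real \<Rightarrow> nat set) \<Rightarrow> bool" where
  "c0_decomp x S \<longleftrightarrow>
     (\<forall>\<xi>\<in>acc_points x. infinite (S \<xi>)) \<and>
     (\<forall>\<xi>\<in>acc_points x. \<forall>\<eta>\<in>acc_points x. \<xi> \<noteq> \<eta> \<longrightarrow> S \<xi> \<inter> S \<eta> = {}) \<and>
     (\<Union>\<xi>\<in>acc_points x. S \<xi>) = UNIV \<and>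
     (\<lambda>m. x m - (\<Sum>\<xi>\<in>acc_points x. if m \<in> S \<xi> then \<xi> else 0)) \<longlonglongrightarrow> 0"

text \<open>E_{x,y}, indexed by pairs of accumulation points (xi_i, eta_j) instead of index pairs (i,j).\<close>
definition E_set :: "(nat \<Rightarrow> real) \<Rightarrow> (nat \<Rightarrow> real) \<Rightarrow> (real \<times> real) set" where
  "E_set x y = (let S = (SOME S. c0_decomp x S); T = (SOME T. c0_decomp y T) in
     {(\<xi>, \<eta>). \<xi> \<in> acc_points x \<and> \<eta> \<in> acc_points y \<and> infinite (S \<xi> \<inter> T \<eta>)})"

definition span2 :: "(nat \<Rightarrow> real) \<Rightarrow> (nat \<Rightarrow> real) \<Rightarrow> (nat \<Rightarrow> real) set" where
  "span2 x y = {(\<lambda>m. a * x m + b * y m) | a b. True}"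

end

theory Submission
  imports Defs
begin

lemma decomp_sub:
  assumes d: "c0_decomp x S" and fin: "finite (acc_points x)"
    and xi: "\<xi> \<in> acc_points x" and q: "strict_mono q" and qS: "\<And>i. q i \<in> S \<xi>"
  shows "(x \<circ> q) \<longlonglongrightarrow> \<xi>"
proof -
  let ?s = "\<lambda>m. (\<Sum>\<xi>\<in>acc_points x. if m \<in> S \<xi> then \<xi> else 0)"
  have null: "(\<lambda>m. x m - ?s m) \<longlonglongrightarrow> 0" using d unfolding c0_decomp_def by blast
  have "((\<lambda>m. x m - ?s m) \<circ> q) \<longlonglongrightarrow> 0" using LIMSEQ_subseq_LIMSEQ[OF null q] .
  moreover have "?s (q i) = \<xi>" for i
  proof -
    have "?s (q i) = (\<Sum>\<xi>'\<in>acc_points x. if \<xi>' = \<xi> then \<xi>' else 0)"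
    proof (rule sum.cong)
      fix \<xi>' assume "\<xi>' \<in> acc_points x"
      then have "q i \<in> S \<xi>' \<longleftrightarrow> \<xi>' = \<xi>" using d xi qS[of i] unfolding c0_decomp_def by blast
      then show "(if q i \<in> S \<xi>' then \<xi>' else 0) = (if \<xi>' = \<xi> then \<xi>' else 0)" by simp
    qed simp
    also have "\<dots> = \<xi>" using fin xi by simp
    finally show ?thesis .
  qed
  ultimately have "(\<lambda>i. x (q i) - \<xi>) \<longlonglongrightarrow> 0" by (simp add: o_def)
  then have "(\<lambda>i. (x (q i) - \<xi>) + \<xi>) \<longlonglongrightarrow> 0 + \<xi>" by (intro tendsto_add) auto
  then show ?thesis by (simp add: o_def)
qed

lemma decomp_exists:
  assumes b: "bounded (range x)" and fin: "finite (acc_points x)" and ne: "acc_points x \<noteq> {}"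
  shows "\<exists>S. c0_decomp x S"
proof -
  define L where "L = acc_points x"
  have "\<exists>\<xi>. \<xi> \<in> L \<and> (\<forall>\<eta>\<in>L. \<bar>x m - \<xi>\<bar> \<le> \<bar>x m - \<eta>\<bar>)" for m
  proof -
    let ?A = "(\<lambda>\<eta>. \<bar>x m - \<eta>\<bar>) ` L"
    have "Min ?A \<in> ?A" using fin ne L_def by (intro Min_in) auto
    then obtain \<xi> where "\<xi> \<in> L" "\<bar>x m - \<xi>\<bar> = Min ?A" by auto
    moreover have "\<forall>\<eta>\<in>L. Min ?A \<le> \<bar>x m - \<eta>\<bar>" using fin L_def by auto
    ultimately show ?thesis by auto
  qed
  then obtain f where f: "\<And>m. f m \<in> L" "\<And>m \<eta>. \<eta> \<in> L \<Longrightarrow> \<bar>x m - f m\<bar> \<le> \<bar>x m - \<eta>\<bar>"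
    by metis
  define S where "S = (\<lambda>\<xi>. {m. f m = \<xi>})"
  have sum_eq: "(\<Sum>\<xi>\<in>L. if m \<in> S \<xi> then \<xi> else 0) = f m" for m
  proof -
    have "(\<Sum>\<xi>\<in>L. if m \<in> S \<xi> then \<xi> else 0) = (\<Sum>\<xi>\<in>L. if f m = \<xi> then \<xi> else 0)"
      by (simp add: S_def)
    also have "\<dots> = f m" using fin f(1)[of m] L_def by (simp add: sum.delta)
    finally show ?thesis .
  qed
  have conv: "(\<lambda>m. x m - f m) \<longlonglongrightarrow> 0"
  proof (rule ccontr)
    assume "\<not> ?thesis"
    then obtain e where e: "e > 0" "\<forall>N. \<exists>m\<ge>N. \<not> \<bar>x m - f m\<bar> < e"
      unfolding LIMSEQ_def by (auto simp: dist_real_def)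
    define J where "J = {m. \<bar>x m - f m\<bar> \<ge> e}"
    have "infinite J"
      unfolding infinite_nat_iff_unbounded_le J_def using e(2) by (auto simp: not_less)
    define r where "r = enumerate J"
    have r: "strict_mono r" "\<And>i. r i \<in> J"
      using \<open>infinite J\<close> r_def strict_mono_enumerate enumerate_in_set by auto
    have "bounded (range (x \<circ> r))" using b by (rule bounded_subset) auto
    then obtain l r' where r': "strict_mono r'" "((x \<circ> r) \<circ> r') \<longlonglongrightarrow> l"
      using bounded_imp_convergent_subsequence by blast
    have "l \<in> L" unfolding L_def acc_points_def
      using r' r(1) by (intro CollectI exI[of _ "r \<circ> r'"]) (auto simp: o_assoc strict_mono_o)
    from r'(2) e(1) obtain N where "\<forall>j\<ge>N. dist (((x \<circ> r) \<circ> r') j) l < e"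
      unfolding LIMSEQ_def by blast
    then have "\<bar>x (r (r' N)) - l\<bar> < e" by (simp add: dist_real_def)
    moreover have "\<bar>x (r (r' N)) - f (r (r' N))\<bar> \<le> \<bar>x (r (r' N)) - l\<bar>" using f(2) \<open>l \<in> L\<close> by blast
    moreover have "r (r' N) \<in> J" using r by blast
    ultimately show False unfolding J_def by simp
  qed
  have inf: "infinite (S \<xi>)" if xi: "\<xi> \<in> L" for \<xi>
  proof -
    obtain r where r: "strict_mono r" "(x \<circ> r) \<longlonglongrightarrow> \<xi>" using xi unfolding L_def acc_points_def by blast
    have "\<forall>\<^sub>F j in sequentially. \<forall>\<eta>\<in>L-{\<xi>}. \<bar>x (r j) - \<xi>\<bar> < \<bar>\<xi> - \<eta>\<bar>/2"
    proof (rule eventually_ball_finite)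
      show "finite (L - {\<xi>})" using fin L_def by simp
      show "\<forall>\<eta>\<in>L - {\<xi>}. \<forall>\<^sub>F j in sequentially. \<bar>x (r j) - \<xi>\<bar> < \<bar>\<xi> - \<eta>\<bar> / 2"
      proof
        fix \<eta> assume "\<eta> \<in> L - {\<xi>}"
        then have "\<bar>\<xi> - \<eta>\<bar>/2 > 0" by auto
        from r(2)[unfolded tendsto_iff, rule_format, OF this]
        show "\<forall>\<^sub>F j in sequentially. \<bar>x (r j) - \<xi>\<bar> < \<bar>\<xi> - \<eta>\<bar> / 2"
          by (simp add: dist_real_def)
      qed
    qed
    then obtain N where N: "\<And>j. j \<ge> N \<Longrightarrow> \<forall>\<eta>\<in>L-{\<xi>}. \<bar>x (r j) - \<xi>\<bar> < \<bar>\<xi> - \<eta>\<bar>/2"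
      unfolding eventually_sequentially by blast
    have "r j \<in> S \<xi>" if "j \<ge> N" for j
    proof (rule ccontr)
      assume "r j \<notin> S \<xi>"
      then have ne: "f (r j) \<noteq> \<xi>" by (simp add: S_def)
      have a: "\<bar>x (r j) - \<xi>\<bar> < \<bar>\<xi> - f (r j)\<bar>/2" using N[OF that] ne f(1) by blast
      have c: "\<bar>x (r j) - f (r j)\<bar> \<le> \<bar>x (r j) - \<xi>\<bar>" using f(2) xi by blast
      have t: "\<bar>\<xi> - f (r j)\<bar> \<le> \<bar>x (r j) - \<xi>\<bar> + \<bar>x (r j) - f (r j)\<bar>" by linarith
      have gen: "\<And>A B D::real. A < D/2 \<Longrightarrow> B \<le> A \<Longrightarrow> D \<le> A + B \<Longrightarrow> False" by linarith
      show False using gen[OF a c t] .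
    qed
    then have "r ` {N..} \<subseteq> S \<xi>" by auto
    moreover have "infinite (r ` {N..})"
      using r(1) strict_mono_imp_inj_on finite_imageD infinite_Ici by (metis inj_on_subset subset_UNIV)
    ultimately show ?thesis using finite_subset by blast
  qed
  have "c0_decomp x S"
    unfolding c0_decomp_def L_def[symmetric]
  proof (intro conjI)
    show "\<forall>\<xi>\<in>L. infinite (S \<xi>)" using inf by blast
    show "\<forall>\<xi>\<in>L. \<forall>\<eta>\<in>L. \<xi> \<noteq> \<eta> \<longrightarrow> S \<xi> \<inter> S \<eta> = {}" by (auto simp: S_def)
    show "(\<Union>\<xi>\<in>L. S \<xi>) = UNIV" using f(1) by (auto simp: S_def)
    show "(\<lambda>m. x m - (\<Sum>\<xi>\<in>L. if m \<in> S \<xi> then \<xi> else 0)) \<longlonglongrightarrow> 0"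
      using conv by (simp add: sum_eq)
  qed
  then show ?thesis by blast
qed



lemma pair_sub:
  assumes dx: "c0_decomp x S" and dy: "c0_decomp y T"
    and fx: "finite (acc_points x)" and fy: "finite (acc_points y)"
    and xi: "\<xi> \<in> acc_points x" and eta: "\<eta> \<in> acc_points y"
    and q: "strict_mono q" and qS: "\<And>i. q i \<in> S \<xi> \<inter> T \<eta>"
  shows "((\<lambda>m. a * x m + b * y m) \<circ> q) \<longlonglongrightarrow> a * \<xi> + b * \<eta>"
proof -
  have 1: "(x \<circ> q) \<longlonglongrightarrow> \<xi>" using decomp_sub[OF dx fx xi q] qS by blast
  have 2: "(y \<circ> q) \<longlonglongrightarrow> \<eta>" using decomp_sub[OF dy fy eta q] qS by blast
  have "(\<lambda>i. a * (x \<circ> q) i + b * (y \<circ> q) i) \<longlonglongrightarrow> a * \<xi> + b * \<eta>"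
    by (intro tendsto_intros 1 2)
  then show ?thesis by (simp add: o_def)
qed

lemma acc_span:
  assumes dx: "c0_decomp x S" and dy: "c0_decomp y T"
    and fx: "finite (acc_points x)" and fy: "finite (acc_points y)"
  shows "acc_points (\<lambda>m. a * x m + b * y m) =
    (\<lambda>(\<xi>,\<eta>). a * \<xi> + b * \<eta>) ` {(\<xi>, \<eta>). \<xi> \<in> acc_points x \<and> \<eta> \<in> acc_points y \<and> infinite (S \<xi> \<inter> T \<eta>)}"
  (is "acc_points ?z = ?f ` ?E")
proof
  show "?f ` ?E \<subseteq> acc_points ?z"
  proof
    fix c assume "c \<in> ?f ` ?E"
    then obtain \<xi> \<eta> where p: "\<xi> \<in> acc_points x" "\<eta> \<in> acc_points y" "infinite (S \<xi> \<inter> T \<eta>)"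
      and c: "c = a * \<xi> + b * \<eta>" by auto
    define q where "q = enumerate (S \<xi> \<inter> T \<eta>)"
    have q: "strict_mono q" "\<And>i. q i \<in> S \<xi> \<inter> T \<eta>"
      using p(3) q_def strict_mono_enumerate enumerate_in_set by auto
    show "c \<in> acc_points ?z" unfolding acc_points_def c
      using pair_sub[OF dx dy fx fy p(1,2) q] q(1) by blast
  qed
next
  show "acc_points ?z \<subseteq> ?f ` ?E"
  proof
    fix c assume "c \<in> acc_points ?z"
    then obtain r where r: "strict_mono r" "(?z \<circ> r) \<longlonglongrightarrow> c" unfolding acc_points_def by blast
    let ?P = "acc_points x \<times> acc_points y"
    have cov: "UNIV = (\<Union>p\<in>?P. {j. r j \<in> S (fst p) \<inter> T (snd p)})"
    proof -
      have u1: "(\<Union>\<xi>\<in>acc_points x. S \<xi>) = UNIV" using dx unfolding c0_decomp_def by blast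
      have u2: "(\<Union>\<eta>\<in>acc_points y. T \<eta>) = UNIV" using dy unfolding c0_decomp_def by blast
      have cv: "r j \<in> (\<Union>\<xi>\<in>acc_points x. S \<xi>)" "r j \<in> (\<Union>\<eta>\<in>acc_points y. T \<eta>)" for j
        unfolding u1 u2 by auto
      show ?thesis
      proof (intro set_eqI iffI)
        fix j :: nat
        obtain \<xi> \<eta> where "\<xi> \<in> acc_points x" "r j \<in> S \<xi>" "\<eta> \<in> acc_points y" "r j \<in> T \<eta>"
          using cv(1)[of j] cv(2)[of j] by blast
        then show "j \<in> (\<Union>p\<in>?P. {j. r j \<in> S (fst p) \<inter> T (snd p)})"
          by (intro UN_I[of "(\<xi>, \<eta>)"]) auto
      qed simp
    qed
    have "finite ?P" using fx fy by simp
    then obtain p where p: "p \<in> ?P" "infinite {j. r j \<in> S (fst p) \<inter> T (snd p)}"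
    proof -
      have "infinite (\<Union>p\<in>?P. {j. r j \<in> S (fst p) \<inter> T (snd p)})"
        using cov[symmetric] by simp
      then show ?thesis using that finite_UN[OF \<open>finite ?P\<close>] by blast
    qed
    define J where "J = {j. r j \<in> S (fst p) \<inter> T (snd p)}"
    define s where "s = enumerate J"
    have s: "strict_mono s" "\<And>i. s i \<in> J"
      using p(2) J_def s_def strict_mono_enumerate enumerate_in_set by auto
    have rs: "strict_mono (r \<circ> s)" using r(1) s(1) strict_mono_o by blast
    have rsS: "(r \<circ> s) i \<in> S (fst p) \<inter> T (snd p)" for i using s(2)[of i] J_def by simp
    have l1: "(?z \<circ> (r \<circ> s)) \<longlonglongrightarrow> c"
      using LIMSEQ_subseq_LIMSEQ[OF r(2) s(1)] by (simp add: o_assoc)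
    have l2: "(?z \<circ> (r \<circ> s)) \<longlonglongrightarrow> a * fst p + b * snd p"
    proof -
      have "fst p \<in> acc_points x" "snd p \<in> acc_points y" using p(1) by auto
      then show ?thesis by (rule pair_sub[OF dx dy fx fy _ _ rs rsS])
    qed
    have ceq: "c = a * fst p + b * snd p" using LIMSEQ_unique[OF l1 l2] .
    have "r ` J \<subseteq> S (fst p) \<inter> T (snd p)" using J_def by auto
    moreover have "infinite (r ` J)"
      using p(2) J_def r(1) strict_mono_imp_inj_on finite_imageD by (metis inj_on_subset subset_UNIV)
    ultimately have "infinite (S (fst p) \<inter> T (snd p))" using finite_subset by blast
    then show "c \<in> ?f ` ?E" using p(1) ceq
      by (intro image_eqI[of _ _ p]) (auto simp: case_prod_beta)
  qed
qed

theorem lemma2p1: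
  fixes x y :: "nat \<Rightarrow> real" and n k :: nat
  assumes "x \<in> linf" and "y \<in> linf"
    and "finite (acc_points x)" and "card (acc_points x) = n"
    and "finite (acc_points y)" and "card (acc_points y) = k"
    and "n \<ge> 2" and "k \<ge> 2"
  shows "(\<exists>z1\<in>span2 x y. \<exists>z2\<in>span2 x y.
           finite (acc_points z1) \<and> card (acc_points z1) = card (E_set x y) \<and>
           finite (acc_points z2) \<and> card (acc_points z2) < card (E_set x y)) \<and>
         card (E_set x y) = Max {card (acc_points z) | z. z \<in> span2 x y}"
proof -
  note fx = assms(3) and fy = assms(5)
  have nex: "acc_points x \<noteq> {}" using assms(4,7) by auto
  have ney: "acc_points y \<noteq> {}" using assms(6,8) by auto
  have bx: "bounded (range x)" using assms(1) by (simp add: linf_def)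
  have bY: "bounded (range y)" using assms(2) by (simp add: linf_def)
  define S where "S = (SOME S. c0_decomp x S)"
  define T where "T = (SOME T. c0_decomp y T)"
  have dx: "c0_decomp x S" unfolding S_def using decomp_exists[OF bx fx nex] by (rule someI_ex)
  have dy: "c0_decomp y T" unfolding T_def using decomp_exists[OF bY fy ney] by (rule someI_ex)
  define E where "E = {(\<xi>, \<eta>). \<xi> \<in> acc_points x \<and> \<eta> \<in> acc_points y \<and> infinite (S \<xi> \<inter> T \<eta>)}"
  have EE: "E_set x y = E" unfolding E_set_def Let_def E_def S_def T_def by simp
  have acc: "acc_points (\<lambda>m. a * x m + b * y m) = (\<lambda>(\<xi>,\<eta>). a * \<xi> + b * \<eta>) ` E" for a b
    unfolding E_def by (rule acc_span[OF dx dy fx fy])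
  have finE: "finite E"
    by (rule finite_subset[of _ "acc_points x \<times> acc_points y"]) (auto simp: E_def fx fy)
  have fstE: "acc_points x \<subseteq> fst ` E"
  proof
    fix \<xi> assume xi: "\<xi> \<in> acc_points x"
    have infS: "infinite (S \<xi>)" using dx xi unfolding c0_decomp_def by blast
    have u2: "(\<Union>\<eta>\<in>acc_points y. T \<eta>) = UNIV" using dy unfolding c0_decomp_def by blast
    have "S \<xi> = (\<Union>\<eta>\<in>acc_points y. S \<xi> \<inter> T \<eta>)" using u2 by blast
    then have "infinite (\<Union>\<eta>\<in>acc_points y. S \<xi> \<inter> T \<eta>)" using infS by simp
    then obtain \<eta> where "\<eta> \<in> acc_points y" "infinite (S \<xi> \<inter> T \<eta>)" using finite_UN[OF fy] by blast
    then have "(\<xi>, \<eta>) \<in> E" using xi by (simp add: E_def)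
    then show "\<xi> \<in> fst ` E" by force
  qed
  have cardE: "card E \<ge> 2"
  proof -
    have "n \<le> card (fst ` E)" using card_mono[OF finite_imageI[OF finE] fstE] assms(4) by simp
    also have "\<dots> \<le> card E" by (rule card_image_le[OF finE])
    finally show ?thesis using assms(7) by simp
  qed
  then have Ene: "E \<noteq> {}" by auto
  have span: "z \<in> span2 x y \<longleftrightarrow> (\<exists>a b. z = (\<lambda>m. a * x m + b * y m))" for z
    by (auto simp: span2_def)
  have bound: "finite (acc_points z) \<and> card (acc_points z) \<le> card E" if "z \<in> span2 x y" for z
  proof -
    from span[THEN iffD1, OF that] obtain a b where z: "z = (\<lambda>m. a * x m + b * y m)" by blast
    show ?thesis unfolding z acc by (simp add: finE card_image_le)
  qed
  define B where "B = (\<lambda>(p, p'). (fst p' - fst p) / (snd p - snd p')) ` (E \<times> E)"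
  have "finite B" unfolding B_def using finE by simp
  then obtain b where bB: "b \<notin> B" using ex_new_if_finite[OF infinite_UNIV_char_0] by blast
  have inj: "inj_on (\<lambda>(\<xi>,\<eta>). 1 * \<xi> + b * \<eta>) E"
  proof (rule inj_onI)
    fix p p' assume pE: "p \<in> E" "p' \<in> E"
      and eq: "(\<lambda>(\<xi>,\<eta>). 1 * \<xi> + b * \<eta>) p = (\<lambda>(\<xi>,\<eta>). 1 * \<xi> + b * \<eta>) p'"
    obtain \<xi> \<eta> \<xi>' \<eta>' where pp: "p = (\<xi>, \<eta>)" "p' = (\<xi>', \<eta>')" by (cases p, cases p') auto
    have e: "\<xi> + b * \<eta> = \<xi>' + b * \<eta>'" using eq pp by simp
    show "p = p'"
    proof (cases "\<eta> = \<eta>'")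
      case True then show ?thesis using e pp by simp
    next
      case False
      then have nz: "\<eta> - \<eta>' \<noteq> 0" by simp
      have d: "b * (\<eta> - \<eta>') = b * \<eta> - b * \<eta>'" by (rule right_diff_distrib)
      have m: "b * (\<eta> - \<eta>') = \<xi>' - \<xi>" using e d by linarith
      have "b = (\<xi>' - \<xi>) / (\<eta> - \<eta>')" by (rule eq_divide_imp[OF nz m])
      then have "b = (\<lambda>(p, p'). (fst p' - fst p) / (snd p - snd p')) (p, p')" using pp by simp
      moreover have "(p, p') \<in> E \<times> E" using pE by simp
      ultimately have "b \<in> B" unfolding B_def by (rule image_eqI)
      then show ?thesis using bB by simp
    qed
  qed
  define z1 where "z1 = (\<lambda>m. 1 * x m + b * y m)"
  define z2 where "z2 = (\<lambda>m. 0 * x m + 0 * y m)"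
  have z1s: "z1 \<in> span2 x y" "z2 \<in> span2 x y" unfolding z1_def z2_def span by blast+
  have c1: "card (acc_points z1) = card E" unfolding z1_def acc using card_image[OF inj] .
  have "acc_points z2 = {0}" unfolding z2_def acc using Ene by auto
  then have c2: "card (acc_points z2) < card E" using cardE by simp
  have f1: "finite (acc_points z1)" "finite (acc_points z2)" using bound z1s by blast+
  let ?M = "{card (acc_points z) | z. z \<in> span2 x y}"
  have "Max ?M = card E"
  proof (rule Max_eqI)
    show "finite ?M" by (rule finite_subset[of _ "{..card E}"]) (auto dest: bound)
    show "y' \<le> card E" if "y' \<in> ?M" for y' using that bound by auto
    show "card E \<in> ?M" using z1s c1 by force
  qed
  then show ?thesis unfolding EE using z1s c1 c2 f1 by metis
qed

end
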